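(* Let $\mathcal{A}$ be an integral domain with field of fractions $\mathcal{F}$, let $\mathcal{Z}\subsetneq\mathcal{A}$ be a prime ideal, and let $\mathcal{P}=\{n/d\mid n\in\mathcal{A},\ d\in\mathcal{A}\setminus\mathcal{Z}\}$ be the set of causal transfer functions. Suppose there exist $a,b,a',b'\in\mathcal{A}$ with $a'\neq 0$ such that: (i) $ab=a'b'$; (ii) the ratio $a/a'$ belongs to $\mathcal{P}$ (i.e. is a causal transfer function) and does not have a coprime factorization over $\mathcal{A}$; (iii) the pair $(a,b)$ is coprime over $\mathcal{A}$, i.e. there exist $x,y\in\mathcal{A}$ with $xa+yb=1$. Then there exists a causal stabilizable plant $P$ which has neither a right-coprime factorization nor a left-coprime factorization over $\mathcal{A}$.
   Context: Setting: $\mathcal{A}$ is the ring of stable causal transfer functions, $\mathcal{F}$ its field of fractions (all possible transfer functions), and causality is defined via the prime ideal $\mathcal{Z}$: a plant (a matrix) is causal if all its entries lie in $\mathcal{P}$. For a plant $P$ (an $n\times m$ matrix over $\mathcal{F}$) and a controller $C$ (an $m\times n$ matrix over $\mathcal{F}$) with $\det(I_n+PC)\neq0$, the closed-loop matrix is $H(P,C)=\begin{pmatrix}(I_n+PC)^{-1} & -P(I_m+CP)^{-1}\\ C(I_n+PC)^{-1} & (I_m+CP)^{-1}\end{pmatrix}$; the closed loop is stable if $H(P,C)$ has all entries in $\mathcal{A}$, and $P$ is stabilizable if some such $C$ exists. A right-coprime factorization of $P$ over $\mathcal{A}$ is $P=ND^{-1}$ with $N,D$ matrices over $\mathcal{A}$,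 $\det D\neq0$, such that $YN+XD=I$ for some matrices $X,Y$ over $\mathcal{A}$; a left-coprime factorization is $P=\tilde D^{-1}\tilde N$ with $\tilde N,\tilde D$ over $\mathcal{A}$, $\det\tilde D\neq0$, and $\tilde N\tilde Y+\tilde D\tilde X=I$ for some $\tilde X,\tilde Y$ over $\mathcal{A}$. For a scalar $p\in\mathcal{F}$ a coprime factorization is $p=n/d$ with $n,d\in\mathcal{A}$, $d\neq0$, and $xn+yd=1$ for some $x,y\in\mathcal{A}$. *)

theory Defs
  imports "HOL-Computational_Algebra.Fraction_Field" "Jordan_Normal_Form.Gauss_Jordan_Elimination"
    "Jordan_Normal_Form.Determinant"
begin

text \<open>The ring A is an abstract integral domain (type class idom); its field of
fractions F is the type 'a fract.  Elements of A are embedded into F as Fract a 1.\<close>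

definition in_A :: "'a::idom fract \<Rightarrow> bool" where
  "in_A f \<longleftrightarrow> (\<exists>a. f = Fract a 1)"

definition proper_prime_ideal :: "'a::idom set \<Rightarrow> bool" where
  "proper_prime_ideal Z \<longleftrightarrow>
     0 \<in> Z \<and> (\<forall>x\<in>Z. \<forall>y\<in>Z. x + y \<in> Z) \<and> (\<forall>r. \<forall>x\<in>Z. r * x \<in> Z) \<and>
     Z \<noteq> UNIV \<and> (\<forall>x y. x * y \<in> Z \<longrightarrow> x \<in> Z \<or> y \<in> Z)"

definition causal_tf :: "'a::idom set \<Rightarrow> 'a fract set" where
  "causal_tf Z = {Fract n d | n d. d \<notin> Z}"

definition mat_over_A :: "'a::idom fract mat \<Rightarrow> bool" where
  "mat_over_A M \<longleftrightarrow> (\<forall>i < dim_row M. \<forall>j < dim_col M. in_A (M $$ (i, j)))"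

definition causal_mat :: "'a::idom set \<Rightarrow> 'a fract mat \<Rightarrow> bool" where
  "causal_mat Z M \<longleftrightarrow> (\<forall>i < dim_row M. \<forall>j < dim_col M. M $$ (i, j) \<in> causal_tf Z)"

definition minv :: "'a::field mat \<Rightarrow> 'a mat" where
  "minv M = the (mat_inverse M)"

definition closed_loop :: "'a::field mat \<Rightarrow> 'a mat \<Rightarrow> 'a mat" where
  "closed_loop P C =
     (let n = dim_row P; m = dim_col P in
      four_block_mat (minv (1\<^sub>m n + P * C)) (- (P * minv (1\<^sub>m m + C * P)))
                     (C * minv (1\<^sub>m n + P * C)) (minv (1\<^sub>m m + C * P)))"

definition stabilizes :: "'a::idom fract mat \<Rightarrow> 'a fract mat \<Rightarrow> bool" where
  "stabilizes P C \<longleftrightarrow> C \<in> carrier_mat (dim_col P) (dim_row P) \<and>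
     det (1\<^sub>m (dim_row P) + P * C) \<noteq> 0 \<and> mat_over_A (closed_loop P C)"

definition stabilizable :: "'a::idom fract mat \<Rightarrow> bool" where
  "stabilizable P \<longleftrightarrow> (\<exists>C. stabilizes P C)"

definition has_right_coprime_fact :: "'a::idom fract mat \<Rightarrow> bool" where
  "has_right_coprime_fact P \<longleftrightarrow>
     (let n = dim_row P; m = dim_col P in
      \<exists>N D X Y. N \<in> carrier_mat n m \<and> D \<in> carrier_mat m m \<and>
        X \<in> carrier_mat m m \<and> Y \<in> carrier_mat m n \<and>
        mat_over_A N \<and> mat_over_A D \<and> mat_over_A X \<and> mat_over_A Y \<and>
        det D \<noteq> 0 \<and> P = N * minv D \<and> Y * N + X * D = 1\<^sub>m m)"

definition has_left_coprime_fact :: "'a::idom fract mat \<Rightarrow> bool" where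
  "has_left_coprime_fact P \<longleftrightarrow>
     (let n = dim_row P; m = dim_col P in
      \<exists>Nt Dt Xt Yt. Nt \<in> carrier_mat n m \<and> Dt \<in> carrier_mat n n \<and>
        Xt \<in> carrier_mat n n \<and> Yt \<in> carrier_mat m n \<and>
        mat_over_A Nt \<and> mat_over_A Dt \<and> mat_over_A Xt \<and> mat_over_A Yt \<and>
        det Dt \<noteq> 0 \<and> P = minv Dt * Nt \<and> Nt * Yt + Dt * Xt = 1\<^sub>m n)"

definition has_coprime_fact :: "'a::idom fract \<Rightarrow> bool" where
  "has_coprime_fact p \<longleftrightarrow>
     (\<exists>n d x y. d \<noteq> 0 \<and> p = Fract n d \<and> x * n + y * d = 1)"

end

theory Submission
  imports Defs
begin

abbreviation m11 :: "'b \<Rightarrow> 'b mat" where "m11 u \<equiv> mat 1 1 (\<lambda>_. u)"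

lemma mat11_eq: "M \<in> carrier_mat 1 1 \<Longrightarrow> M = m11 (M $$ (0,0))"
  by (rule eq_matI) auto

lemma mult11: "m11 (u::'b::semiring_1) * m11 v = m11 (u * v)"
  by (rule eq_matI) (auto simp: scalar_prod_def)

lemma add11: "m11 (u::'b::semiring_1) + m11 v = m11 (u + v)"
  by (rule eq_matI) auto

lemma one11: "(1\<^sub>m 1 :: 'b::semiring_1 mat) = m11 1"
  by (rule eq_matI) auto

lemma uminus11: "- m11 (u::'b::ring_1) = m11 (- u)"
  by (rule eq_matI) auto

lemma det11: "det (m11 (u::'b::comm_ring_1)) = u"
  by (subst det_single) auto

lemma minv11:
  fixes u :: "'b::field"
  assumes "u \<noteq> 0"
  shows "minv (m11 u) = m11 (inverse u)"
proof -
  let ?M = "m11 u" and ?N = "m11 (inverse u)"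
  have MN: "?M * ?N = 1\<^sub>m 1" and NM: "?N * ?M = 1\<^sub>m 1"
    unfolding mult11 one11 using assms by simp_all
  have "?M \<in> Units (ring_mat TYPE('b) 1 undefined)"
    unfolding Units_def ring_mat_simps using MN NM by auto
  then have "mat_inverse ?M \<noteq> None"
    using mat_inverse(1)[of ?M 1 undefined] by auto
  then obtain B where B: "mat_inverse ?M = Some B" by auto
  from mat_inverse(2)[OF _ B, of 1] have MB: "?M * B = 1\<^sub>m 1" and Bc: "B \<in> carrier_mat 1 1"
    by auto
  have "B = (?N * ?M) * B" using NM Bc by simp
  also have "\<dots> = ?N * (?M * B)"
    by (rule assoc_mult_mat[of _ 1 1 _ 1 _ 1]) (use Bc in auto)
  also have "\<dots> = ?N" using MB by simp
  finally show ?thesis unfolding minv_def B by simp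
qed

lemma m11_inj: "m11 u = m11 v \<Longrightarrow> u = v"
  by (drule arg_cong[where f = "\<lambda>M. M $$ (0,0)"]) simp

lemma in_A_ex: "in_A f \<Longrightarrow> \<exists>t. f = Fract t 1" unfolding in_A_def by auto

theorem proposition1:
  fixes Z :: "'a::idom set" and a b a' b' :: 'a
  assumes "proper_prime_ideal Z"
    and "a' \<noteq> 0"
    and "a * b = a' * b'"
    and "Fract a a' \<in> causal_tf Z"
    and "\<not> has_coprime_fact (Fract a a')"
    and "\<exists>x y. x * a + y * b = 1"
  shows "\<exists>P :: 'a fract mat. causal_mat Z P \<and> stabilizable P \<and>
           \<not> has_right_coprime_fact P \<and> \<not> has_left_coprime_fact P"
proof -
  obtain x y where xy: "x * a + y * b = 1" using assms(6) by auto
  define p where "p = Fract a a'"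
  have yb: "y * b \<noteq> 0"
  proof
    assume "y * b = 0"
    then have xa: "x * a = 1" using xy by (metis add.right_neutral)
    then have "x \<noteq> 0" by auto
    then have "x * a' \<noteq> 0" using assms(2) by simp
    then have "Fract a a' = Fract 1 (x * a')" using assms(2) xa
      by (simp add: eq_fract mult.commute mult.left_commute)
    then have "has_coprime_fact (Fract a a')" unfolding has_coprime_fact_def
      using \<open>x * a' \<noteq> 0\<close> by (intro exI[of _ 1] exI[of _ "x * a'"] exI[of _ 1] exI[of _ 0]) auto
    then show False using assms(5) by simp
  qed
  then have y0: "y \<noteq> 0" and b0: "b \<noteq> 0" by auto
  define c where "c = Fract (x * a') (y * b)"
  have pc: "p * c = Fract (x * a) (y * b)"
    unfolding p_def c_def using assms(2)
    using mult_fract_cancel[of a' "x*a" "y*b"] by (simp add: ac_simps)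
  have onepc: "1 + p * c = Fract 1 (y * b)"
    unfolding pc using yb xy by (simp add: One_fract_def algebra_simps)
  have inv: "inverse (1 + p * c) = Fract (y * b) 1"
    unfolding onepc by simp
  have cp: "c * p = p * c" by (simp add: mult.commute)
  have e1: "p * inverse (1 + p * c) = Fract (y * b') 1"
    unfolding inv using assms(2,3)
    by (simp add: p_def eq_fract algebra_simps)
  have e2: "c * inverse (1 + p * c) = Fract (x * a') 1"
    unfolding inv using yb
    by (simp add: c_def eq_fract algebra_simps)
  have nz: "1 + p * c \<noteq> 0" unfolding onepc using yb by (simp add: eq_fract Zero_fract_def)
  define P where "P = m11 p"
  define C where "C = m11 c"
  have PC: "1\<^sub>m 1 + P * C = m11 (1 + p * c)" unfolding P_def C_def mult11 one11 add11 by (rule refl)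
  have CP: "1\<^sub>m 1 + C * P = m11 (1 + p * c)" unfolding P_def C_def mult11 one11 add11 cp by (rule refl)
  have CL: "closed_loop P C = four_block_mat (m11 (Fract (y*b) 1)) (m11 (- Fract (y * b') 1))
      (m11 (Fract (x * a') 1)) (m11 (Fract (y*b) 1))"
  proof -
    have dr: "dim_row P = 1" and dc: "dim_col P = 1" unfolding P_def by auto
    show ?thesis
    unfolding closed_loop_def Let_def dr dc PC CP minv11[OF nz]
    unfolding P_def C_def mult11 uminus11 e1 e2 unfolding inv ..
  qed
  have stab: "stabilizes P C"
    unfolding stabilizes_def
  proof (intro conjI)
    show "C \<in> carrier_mat (dim_col P) (dim_row P)" unfolding P_def C_def by auto
    show "det (1\<^sub>m (dim_row P) + P * C) \<noteq> 0"
    proof -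
      have "dim_row P = 1" unfolding P_def by simp
      then show ?thesis unfolding PC[symmetric] using PC nz det11 by metis
    qed
    show "mat_over_A (closed_loop P C)"
      unfolding CL mat_over_A_def in_A_def
      by (auto simp: less_Suc_eq intro!: exI)
  qed
  have causal: "causal_mat Z P"
    unfolding causal_mat_def P_def using assms(4) p_def by auto
  have right: "\<not> has_right_coprime_fact P"
  proof
    assume "has_right_coprime_fact P"
    then obtain N D X Y where N: "N \<in> carrier_mat 1 1" and D: "D \<in> carrier_mat 1 1"
      and X: "X \<in> carrier_mat 1 1" and Y: "Y \<in> carrier_mat 1 1"
      and AN: "mat_over_A N" and AD: "mat_over_A D" and AX: "mat_over_A X" and AY: "mat_over_A Y"
      and dD: "det D \<noteq> 0" and PN: "P = N * minv D" and B: "Y * N + X * D = 1\<^sub>m 1"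
      unfolding has_right_coprime_fact_def Let_def P_def by auto
    obtain n where n: "N $$ (0,0) = Fract n 1" using AN N in_A_ex unfolding mat_over_A_def by fastforce
    obtain d where d: "D $$ (0,0) = Fract d 1" using AD D in_A_ex unfolding mat_over_A_def by fastforce
    obtain u where u: "X $$ (0,0) = Fract u 1" using AX X in_A_ex unfolding mat_over_A_def by fastforce
    obtain v where v: "Y $$ (0,0) = Fract v 1" using AY Y in_A_ex unfolding mat_over_A_def by fastforce
    have d0: "Fract d 1 \<noteq> 0" using dD D d det_single by metis
    then have d0': "d \<noteq> 0" by (auto simp: fract_collapse)
    have "m11 p = m11 (Fract n 1) * minv (m11 (Fract d 1))"
      using PN mat11_eq[OF N] mat11_eq[OF D] n d P_def by metis
    then have "m11 p = m11 (Fract n 1 * inverse (Fract d 1))" unfolding minv11[OF d0] mult11 .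
    then have "m11 p = m11 (Fract n d)" by simp
    then have pe: "p = Fract n d" by (rule m11_inj)
    have "m11 (Fract v 1) * m11 (Fract n 1) + m11 (Fract u 1) * m11 (Fract d 1) = m11 1"
      using B mat11_eq[OF N] mat11_eq[OF D] mat11_eq[OF X] mat11_eq[OF Y] n d u v one11 by metis
    then have "m11 (Fract (v * n + u * d) 1) = m11 (Fract 1 1)"
      unfolding mult11 add11 by (simp add: One_fract_def)
    then have "Fract (v * n + u * d) 1 = Fract 1 1"
      by (rule m11_inj)
    then have "v * n + u * d = 1" by (simp add: eq_fract)
    then have "has_coprime_fact p" unfolding has_coprime_fact_def using pe d0' by blast
    then show False using assms(5) p_def by simp
  qed
  have left: "\<not> has_left_coprime_fact P"
  proof
    assume "has_left_coprime_fact P"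
    then obtain N D X Y where N: "N \<in> carrier_mat 1 1" and D: "D \<in> carrier_mat 1 1"
      and X: "X \<in> carrier_mat 1 1" and Y: "Y \<in> carrier_mat 1 1"
      and AN: "mat_over_A N" and AD: "mat_over_A D" and AX: "mat_over_A X" and AY: "mat_over_A Y"
      and dD: "det D \<noteq> 0" and PN: "P = minv D * N" and B: "N * Y + D * X = 1\<^sub>m 1"
      unfolding has_left_coprime_fact_def Let_def P_def by auto
    obtain n where n: "N $$ (0,0) = Fract n 1" using AN N in_A_ex unfolding mat_over_A_def by fastforce
    obtain d where d: "D $$ (0,0) = Fract d 1" using AD D in_A_ex unfolding mat_over_A_def by fastforce
    obtain u where u: "X $$ (0,0) = Fract u 1" using AX X in_A_ex unfolding mat_over_A_def by fastforce
    obtain v where v: "Y $$ (0,0) = Fract v 1" using AY Y in_A_ex unfolding mat_over_A_def by fastforce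
    have d0: "Fract d 1 \<noteq> 0" using dD D d det_single by metis
    then have d0': "d \<noteq> 0" by (auto simp: fract_collapse)
    have "m11 p = minv (m11 (Fract d 1)) * m11 (Fract n 1)"
      using PN mat11_eq[OF N] mat11_eq[OF D] n d P_def by metis
    then have "m11 p = m11 (inverse (Fract d 1) * Fract n 1)" unfolding minv11[OF d0] mult11 .
    then have "m11 p = m11 (Fract n d)" by simp
    then have pe: "p = Fract n d" by (rule m11_inj)
    have "m11 (Fract n 1) * m11 (Fract v 1) + m11 (Fract d 1) * m11 (Fract u 1) = m11 1"
      using B mat11_eq[OF N] mat11_eq[OF D] mat11_eq[OF X] mat11_eq[OF Y] n d u v one11 by metis
    then have "m11 (Fract (v * n + u * d) 1) = m11 (Fract 1 1)"
      unfolding mult11 add11 by (simp add: One_fract_def mult.commute)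
    then have "Fract (v * n + u * d) 1 = Fract 1 1"
      by (rule m11_inj)
    then have "v * n + u * d = 1" by (simp add: eq_fract)
    then have "has_coprime_fact p" unfolding has_coprime_fact_def using pe d0' by blast
    then show False using assms(5) p_def by simp
  qed
  show ?thesis using causal stab right left unfolding stabilizable_def by blast
qed

end
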